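(* Let $U_n\in U(n)$ be a unitary matrix whose eigenvalues are pairwise distinct and different from $1$, with characteristic polynomial $Z_n(X)=\det(X-U_n)$, eigenangles $(\theta_k^{(n)})_{k\in\mathbb{Z}}$ and renormalized eigenangles $y_k^{(n)}=\frac{n}{2\pi}\theta_k^{(n)}$ as in the context. Let $k\in\mathbb{Z}$ and let $\varepsilon>0$ be small enough that there is no eigenangle of $U_n$ in $[0,\varepsilon]$ nor in $(\theta_k^{(n)},\theta_k^{(n)}+\varepsilon]$. Then $$k = y_k^{(n)} - \frac{1}{\pi}\Im\left( \log Z_n\big(e^{i(\theta_k^{(n)}+\varepsilon)}\big) - \log Z_n\big(e^{i\varepsilon}\big)\right).$$
   Context: $(\theta_k^{(n)})_{k\in\mathbb{Z}}$ is the increasing enumeration of all real numbers $\theta$ such that $e^{i\theta}$ is an eigenvalue of $U_n$, indexed so that $\dots<\theta_0^{(n)}<0<\theta_1^{(n)}<\dots$; thus $\theta_{k+n}^{(n)}=\theta_k^{(n)}+2\pi$. An eigenangle means any $\theta_k^{(n)}$. Let $\mathcal{D} = \mathbb{C} \setminus \{ r e^{i\theta_k^{(n)}} : k\in\mathbb{Z}, r\ge1\}$; $\log Z_n$ is the unique continuous determination of the logarithm of $Z_n$ on $\mathcal{D}$ with $\log Z_n(0) \in i(-\pi,\pi]$. *)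

theory Defs
  imports "HOL-Analysis.Analysis"
begin

definition conj_transpose :: "complex^'n^'m \<Rightarrow> complex^'m^'n" where
  "conj_transpose U = (\<chi> i j. cnj (U $ j $ i))"

definition unitary_mat :: "complex^'n^'n \<Rightarrow> bool" where
  "unitary_mat U \<longleftrightarrow> U ** conj_transpose U = mat 1 \<and> conj_transpose U ** U = mat 1"

definition is_eigenvalue :: "complex^'n^'n \<Rightarrow> complex \<Rightarrow> bool" where
  "is_eigenvalue U z \<longleftrightarrow> (\<exists>v. v \<noteq> 0 \<and> U *v v = z *s v)"

definition charpoly_Z :: "complex^'n^'n \<Rightarrow> complex \<Rightarrow> complex" where
  "charpoly_Z U z = det (mat z - U)"

definition eigenangle :: "complex^'n^'n \<Rightarrow> int \<Rightarrow> real" where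
  "eigenangle U = (THE f. strict_mono f \<and> range f = {t. is_eigenvalue U (cis t)}
                        \<and> f 0 < 0 \<and> 0 < f 1)"

definition renorm_eigenangle :: "complex^'n^'n \<Rightarrow> int \<Rightarrow> real" where
  "renorm_eigenangle U k = real CARD('n) / (2 * pi) * eigenangle U k"

definition slit_domain :: "complex^'n^'n \<Rightarrow> complex set" where
  "slit_domain U = - {complex_of_real r * cis (eigenangle U k) | r k. r \<ge> 1}"

definition logZ :: "complex^'n^'n \<Rightarrow> complex \<Rightarrow> complex" where
  "logZ U = (THE L. continuous_on (slit_domain U) L
               \<and> (\<forall>z\<in>slit_domain U. exp (L z) = charpoly_Z U z)
               \<and> (\<exists>t\<in>{-pi<..pi}. L 0 = \<i> * complex_of_real t)
               \<and> (\<forall>z. z \<notin> slit_domain U \<longrightarrow> L z = 0))"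

end

theory Submission imports Defs "HOL-Computational_Algebra.Polynomial" begin

lemma mat_minus_mult: fixes U :: "complex^'n^'n" shows "(mat z - U) *v v = z *s v - U *v v"
proof -
  have "(\<Sum>j\<in>UNIV. ((if i = j then z else 0) - U $ i $ j) * v $ j) =
        (\<Sum>j\<in>UNIV. (if i = j then z * v $ j else 0)) - (\<Sum>j\<in>UNIV. U $ i $ j * v $ j)" for i
  proof -
    have "(\<Sum>j\<in>UNIV. ((if i = j then z else 0) - U $ i $ j) * v $ j) =
        (\<Sum>j\<in>UNIV. (if i = j then z * v $ j else 0) - U $ i $ j * v $ j)"
      by (rule sum.cong) (auto simp: algebra_simps)
    then show ?thesis by (simp add: sum_subtractf)
  qed
  then show ?thesis
    unfolding vec_eq_iff matrix_vector_mult_def mat_def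
    by (simp only: vec_lambda_beta vector_minus_component vector_smult_component
        minus_vec_def sum.delta finite_UNIV UNIV_I if_True) simp
qed

lemma eig_Z0: assumes "is_eigenvalue U z" shows "charpoly_Z U z = 0"
proof -
  obtain v where v: "v \<noteq> 0" "U *v v = z *s v" using assms unfolding is_eigenvalue_def by blast
  have Av: "(mat z - U) *v v = 0" using v by (simp add: mat_minus_mult)
  show ?thesis
  proof (rule ccontr)
    assume "charpoly_Z U z \<noteq> 0"
    then have "invertible (mat z - U)" unfolding charpoly_Z_def by (simp add: invertible_det_nz)
    then obtain B where B: "B ** (mat z - U) = mat 1" unfolding invertible_def by blast
    have "v = (B ** (mat z - U)) *v v" using B by simp
    also have "\<dots> = 0" by (simp flip: matrix_vector_mul_assoc add: Av)
    finally show False using v by simp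
  qed
qed

lemma unitary_iso:
  fixes U :: "complex^'n^'n"
  assumes "conj_transpose U ** U = mat 1"
  shows "(\<Sum>i\<in>UNIV. cnj ((U *v v)$i) * (U *v v)$i) = (\<Sum>i\<in>UNIV. cnj (v$i) * v$i)"
proof -
  have key: "(\<Sum>i\<in>UNIV. cnj (U$i$j) * U$i$l) = (if j = l then 1 else 0)" for j l
  proof -
    have "(conj_transpose U ** U) $ j $ l = (if j = l then 1 else 0)" using assms by (simp add: mat_def)
    then show ?thesis by (simp add: matrix_matrix_mult_def conj_transpose_def)
  qed
  have "(\<Sum>i\<in>UNIV. cnj ((U *v v)$i) * (U *v v)$i)
      = (\<Sum>i\<in>UNIV. \<Sum>j\<in>UNIV. \<Sum>l\<in>UNIV. cnj (v$j) * v$l * (cnj (U$i$j) * U$i$l))"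
    apply (simp add: matrix_vector_mult_def sum_product cnj_sum algebra_simps)
    apply (rule sum.cong[OF refl])
    apply (rule sum.swap)
    done
  also have "\<dots> = (\<Sum>j\<in>UNIV. \<Sum>i\<in>UNIV. \<Sum>l\<in>UNIV. cnj (v$j) * v$l * (cnj (U$i$j) * U$i$l))"
    by (rule sum.swap)
  also have "\<dots> = (\<Sum>j\<in>UNIV. \<Sum>l\<in>UNIV. \<Sum>i\<in>UNIV. cnj (v$j) * v$l * (cnj (U$i$j) * U$i$l))"
    by (rule sum.cong[OF refl], rule sum.swap)
  also have "\<dots> = (\<Sum>j\<in>UNIV. \<Sum>l\<in>UNIV. cnj (v$j) * v$l * (if j = l then 1 else 0))"
    by (simp add: sum_distrib_left[symmetric] key)
  also have "\<dots> = (\<Sum>i\<in>UNIV. cnj (v$i) * v$i)"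
    by (simp add: if_distrib cong: if_cong)
  finally show ?thesis .
qed

lemma unitary_eig_norm:
  fixes U :: "complex^'n^'n"
  assumes "unitary_mat U" "is_eigenvalue U z"
  shows "cmod z = 1"
proof -
  obtain v where v: "v \<noteq> 0" "U *v v = z *s v" using assms(2) unfolding is_eigenvalue_def by blast
  have C: "conj_transpose U ** U = mat 1" using assms(1) unfolding unitary_mat_def by blast
  define s where "s = (\<Sum>i\<in>UNIV. (cmod (v$i))^2)"
  have s_eq: "(\<Sum>i\<in>UNIV. cnj (v$i) * v$i) = complex_of_real s"
    unfolding s_def of_real_sum
    by (rule sum.cong[OF refl]) (metis complex_norm_square mult.commute)
  obtain i where i: "v$i \<noteq> 0" using v(1) by (metis vec_eq_iff zero_index)
  have "s \<ge> (cmod (v$i))^2" unfolding s_def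
    by (rule member_le_sum) auto
  then have spos: "s > 0" using i by (smt (verit) zero_less_norm_iff zero_less_power)
  have "(\<Sum>i\<in>UNIV. cnj ((U *v v)$i) * (U *v v)$i) = (cnj z * z) * (\<Sum>i\<in>UNIV. cnj (v$i) * v$i)"
    by (simp add: v(2) sum_distrib_left algebra_simps)
  then have "complex_of_real s = (cnj z * z) * complex_of_real s"
    using unitary_iso[OF C, of v] s_eq by simp
  moreover have "cnj z * z = complex_of_real ((cmod z)^2)" by (metis complex_norm_square mult.commute)
  ultimately have "complex_of_real s = complex_of_real ((cmod z)^2) * complex_of_real s" by simp
  then have "s = (cmod z)^2 * s" by (metis of_real_eq_iff of_real_mult)
  then have "(cmod z)^2 = 1" using spos by simp
  then show ?thesis using norm_ge_zero[of z] by (simp add: power2_eq_1_iff)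
qed

definition cpoly :: "complex^'n^'n \<Rightarrow> complex poly" where
  "cpoly U = (\<Sum>p | p permutes (UNIV::'n set). smult (of_int (sign p))
       (\<Prod>i\<in>UNIV. [: - U$i$(p i), (if i = p i then 1 else 0) :]))"

lemma poly_cpoly: "poly (cpoly U) z = charpoly_Z U z"
  unfolding cpoly_def charpoly_Z_def det_def
  apply (simp add: poly_sum poly_prod)
  apply (rule sum.cong[OF refl])
  apply (rule arg_cong[where f="\<lambda>x. _ * x"])
  apply (rule prod.cong[OF refl])
  apply (simp add: mat_def)
  done

lemma deg_lin_le: "degree [: a, b :] \<le> (if b = 0 then 0 else 1)"
  by (cases "b = 0") auto

lemma deg_term_le:
  "degree (\<Prod>i\<in>(UNIV::'n::finite set). [: a i, (if i = p i then 1 else 0) :]) \<le> card {i. i = p i}"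
proof -
  have "degree (\<Prod>i\<in>(UNIV::'n set). [: a i, (if i = p i then 1 else 0) :])
        \<le> (\<Sum>i\<in>UNIV. degree [: a i, (if i = p i then 1 else 0) :])"
    using degree_prod_sum_le[of "UNIV::'n set" "\<lambda>i. [: a i, (if i = p i then 1 else 0) :]"]
    by (simp add: o_def)
  also have "\<dots> \<le> (\<Sum>i\<in>UNIV. (if i = p i then 1 else 0))"
    by (rule sum_mono) (use deg_lin_le in auto)
  also have "\<dots> = card {i. i = p i}"
    by (simp add: sum.If_cases)
  finally show ?thesis .
qed

lemma deg_term_lt:
  assumes "p \<noteq> id"
  shows "degree (\<Prod>i\<in>(UNIV::'n::finite set). [: a i, (if i = p i then 1 else 0) :]) < CARD('n)"
proof -
  obtain j where "p j \<noteq> j" using assms by (metis eq_id_iff)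
  then have "{i. i = p i} \<subset> (UNIV::'n set)" by (metis (mono_tags) UNIV_I mem_Collect_eq psubsetI subset_UNIV)
  then have "card {i. i = p i} < CARD('n)" by (simp add: psubset_card_mono)
  then show ?thesis using deg_term_le[of a p] by linarith
qed

lemma deg_term_le_n:
  "degree (\<Prod>i\<in>(UNIV::'n::finite set). [: a i, (if i = p i then 1 else 0) :]) \<le> CARD('n)"
  using deg_term_le[of a p] card_mono[of "UNIV::'n set" "{i. i = p i}"] by simp

lemma degree_cpoly: "degree (cpoly (U::complex^'n^'n)) \<le> CARD('n)"
  unfolding cpoly_def
  by (rule degree_sum_le) (auto intro: order.trans[OF degree_smult_le] deg_term_le_n)

lemma coeff_cpoly: "coeff (cpoly (U::complex^'n^'n)) CARD('n) = 1"
proof -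
  have "coeff (cpoly U) CARD('n) = (\<Sum>p | p permutes (UNIV::'n set). (if p = id then 1 else 0))"
    unfolding cpoly_def coeff_sum
  proof (rule sum.cong[OF refl])
    fix p assume "p \<in> {p. p permutes (UNIV::'n set)}"
    show "coeff (smult (of_int (sign p)) (\<Prod>i\<in>UNIV. [: - U$i$(p i), (if i = p i then 1 else 0) :])) CARD('n)
          = (if p = id then 1 else 0)"
    proof (cases "p = id")
      case True
      have ne: "\<forall>i\<in>UNIV. [: - U$i$i, 1 :] \<noteq> 0" by simp
      have d: "degree (\<Prod>i\<in>(UNIV::'n set). [: - U$i$i, 1 :]) = CARD('n)"
        by (subst degree_prod_eq_sum_degree[OF ne]) simp
      have l: "lead_coeff (\<Prod>i\<in>(UNIV::'n set). [: - U$i$i, 1 :]) = 1"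
        by (simp add: lead_coeff_prod)
      show ?thesis using True d l by (simp add: sign_id)
    next
      case False
      then show ?thesis by (simp add: coeff_eq_0 deg_term_lt)
    qed
  qed
  also have "\<dots> = 1" by (simp add: permutes_id)
  finally show ?thesis .
qed

lemma charpoly_factor:
  fixes U :: "complex^'n^'n"
  assumes fin: "finite E" and cE: "card E = CARD('n)" and z0: "\<forall>w\<in>E. charpoly_Z U w = 0"
  shows "charpoly_Z U z = (\<Prod>w\<in>E. z - w)"
proof -
  define Q where "Q = (\<Prod>w\<in>E. [: - w, 1 :])"
  have ne: "\<forall>w\<in>E. [: - w, 1 :] \<noteq> 0" by simp
  have dQ: "degree Q = CARD('n)" unfolding Q_def
    by (subst degree_prod_eq_sum_degree[OF ne]) (simp add: cE)
  have "lead_coeff Q = 1" unfolding Q_def by (simp add: lead_coeff_prod)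
  then have lQ: "coeff Q CARD('n) = 1" using dQ by simp
  define R where "R = cpoly U - Q"
  have cR: "coeff R CARD('n) = 0" unfolding R_def by (simp add: coeff_cpoly lQ)
  have dR: "degree R \<le> CARD('n)" unfolding R_def
    using degree_diff_le[OF degree_cpoly[of U], of Q] dQ by simp
  have "R = 0"
  proof (rule ccontr)
    assume Rne: "R \<noteq> 0"
    have "degree R \<noteq> CARD('n)"
    proof
      assume "degree R = CARD('n)"
      then have "coeff R (degree R) = 0" using cR by simp
      then show False using Rne leading_coeff_neq_0[of R] by blast
    qed
    then have dlt: "degree R < CARD('n)" using dR by simp
    have "E \<subseteq> {x. poly R x = 0}"
    proof
      fix x assume x: "x \<in> E"
      have "poly Q x = 0" unfolding Q_def poly_prod using fin x by (simp add: prod_zero_iff)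
      then show "x \<in> {x. poly R x = 0}" using z0 x by (simp add: R_def poly_cpoly)
    qed
    then have "card E \<le> card {x. poly R x = 0}"
      by (rule card_mono[OF poly_roots_finite[OF Rne]])
    also have "\<dots> \<le> degree R" by (rule card_poly_roots_bound[OF Rne])
    finally show False using dlt cE by simp
  qed
  then have "cpoly U = Q" unfolding R_def by simp
  then have "charpoly_Z U z = poly Q z" using poly_cpoly[of U z] by simp
  then show ?thesis by (simp add: Q_def poly_prod)
qed

lemma cis_period: "cis (x + 2 * pi * of_int m) = cis x"
proof -
  have "cis (2 * pi * of_int m) = 1" by (rule cis_multiple_2pi) simp
  then show ?thesis by (metis cis_mult mult_1_right)
qed

lemma cis_eq_ex: assumes "cis s = cis t" shows "\<exists>m::int. t = s + 2 * pi * of_int m"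
proof -
  have "sin t = sin s \<and> cos t = cos s" using assms by (metis cis.sel)
  then show ?thesis using sin_cos_eq_iff by blast
qed

lemma enum_aux:
  fixes f g :: "int \<Rightarrow> real"
  assumes "strict_mono f" "strict_mono g" "range f \<subseteq> range g" "f k = g k"
  shows "g (k+1) \<le> f (k+1)" "f (k-1) \<le> g (k-1)"
proof -
  obtain j where j: "f (k+1) = g j" using assms(3) by blast
  have "g k < g j" using j assms(4) strict_mono_less[OF assms(1)] by (metis less_add_one)
  then have "k < j" using strict_mono_less[OF assms(2)] by blast
  then have "k + 1 \<le> j" by simp
  then show "g (k+1) \<le> f (k+1)" using j strict_mono_less_eq[OF assms(2)] by metis
next
  obtain j where j: "f (k-1) = g j" using assms(3) by blast
  have "f (k-1) < f k" using strict_mono_less[OF assms(1)] by simp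
  then have "g j < g k" using j assms(4) by simp
  then have "j < k" using strict_mono_less[OF assms(2)] by blast
  then have "j \<le> k - 1" by simp
  then show "f (k-1) \<le> g (k-1)" using j strict_mono_less_eq[OF assms(2)] by metis
qed

lemma enum_base:
  fixes f g :: "int \<Rightarrow> real"
  assumes "strict_mono g" "range f \<subseteq> range g" "f 0 < 0" "0 < g 1"
  shows "f 0 \<le> g 0"
proof -
  obtain j where j: "f 0 = g j" using assms(2) by blast
  have "j < 1" proof (rule ccontr)
    assume "\<not> j < 1" then have "g 1 \<le> g j" using strict_mono_less_eq[OF assms(1)] by simp
    then show False using j assms by simp
  qed
  then have "j \<le> 0" by simp
  then show ?thesis using j strict_mono_less_eq[OF assms(1)] by metis
qed

lemma enum_unique:
  fixes f g :: "int \<Rightarrow> real"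
  assumes "strict_mono f" "strict_mono g" "range f = range g" "f 0 < 0" "0 < f 1" "g 0 < 0" "0 < g 1"
  shows "f = g"
proof
  fix k
  show "f k = g k"
  proof (induction k rule: int_induct[where k=0])
    case base
    show ?case using enum_base[of g f] enum_base[of f g] assms by (simp add: order.antisym)
  next
    case (step1 i)
    then show ?case using enum_aux(1)[of f g i] enum_aux(1)[of g f i] assms by (simp add: order.antisym)
  next
    case (step2 i)
    then show ?case using enum_aux(2)[of f g i] enum_aux(2)[of g f i] assms by (simp add: order.antisym)
  qed
qed

locale UQ =
  fixes U :: "complex^'n^'n"
  assumes unit: "unitary_mat U"
    and cardE0: "card {z. is_eigenvalue U z} = CARD('n)"
    and not1: "\<not> is_eigenvalue U 1"
begin

definition "E = {z. is_eigenvalue U z}"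
definition "S = {t. 0 < t \<and> t < 2 * pi \<and> cis t \<in> E}"
definition "as = sorted_list_of_set S"
definition "th k = as ! nat ((k-1) mod int CARD('n)) + 2 * pi * of_int ((k-1) div int CARD('n))"

lemma npos: "CARD('n) > 0" by simp

lemma cardE: "card E = CARD('n)" using cardE0 by (simp add: E_def)

lemma finE: "finite E" by (rule card_ge_0_finite) (simp add: cardE)

lemma normE: "w \<in> E \<Longrightarrow> cmod w = 1"
  using unitary_eig_norm[OF unit] by (simp add: E_def)

lemma Z_eq: "charpoly_Z U z = (\<Prod>w\<in>E. z - w)"
  by (rule charpoly_factor[OF finE cardE]) (simp add: E_def eig_Z0)

lemma cis_S_E: "bij_betw cis S E"
proof (rule bij_betw_imageI)
  show "inj_on cis S"
  proof (rule inj_onI)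
    fix s t assume st: "s \<in> S" "t \<in> S" "cis s = cis t"
    then obtain m :: int where m: "t = s + 2 * pi * of_int m" using cis_eq_ex by blast
    have "m = 0"
    proof (rule ccontr)
      assume "m \<noteq> 0"
      then have "m \<ge> 1 \<or> m \<le> -1" by linarith
      then have "2 * pi * of_int m \<ge> 2 * pi \<or> 2 * pi * of_int m \<le> - 2 * pi"
        using pi_gt_zero by (smt (verit) mult_le_cancel_left1 of_int_le_iff of_int_1 of_int_minus mult_minus_right)
      moreover have "0 < s" "s < 2 * pi" "0 < t" "t < 2 * pi" using st(1,2) unfolding S_def by auto
      ultimately show False using m by linarith
    qed
    then show "s = t" using m by simp
  qed
  show "cis ` S = E"
  proof
    show "cis ` S \<subseteq> E" unfolding S_def by auto
    show "E \<subseteq> cis ` S"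
    proof
      fix w assume w: "w \<in> E"
      define a where "a = Arg2pi w"
      have "is_Arg w a" "0 \<le> a" "a < 2 * pi" using Arg2pi[of w] by (auto simp: a_def)
      then have wa: "w = cis a" using normE[OF w] by (simp add: is_Arg_def cis_conv_exp mult.commute)
      have "a \<noteq> 0" using wa w not1 by (auto simp: E_def)
      then have "a \<in> S" using \<open>0 \<le> a\<close> \<open>a < 2 * pi\<close> w wa by (auto simp: S_def)
      then show "w \<in> cis ` S" using wa by blast
    qed
  qed
qed

lemma finS: "finite S" using cis_S_E finE bij_betw_finite by blast
lemma cardS: "card S = CARD('n)" using cis_S_E cardE bij_betw_same_card by metis

lemma len_as: "length as = CARD('n)" by (simp add: as_def cardS)
lemma set_as: "set as = S" by (simp add: as_def finS)
lemma sorted_as: "sorted_wrt (<) as" by (simp add: as_def)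

lemma as_S: "i < CARD('n) \<Longrightarrow> as ! i \<in> S" using set_as len_as by (metis nth_mem)
lemma as_bounds: "i < CARD('n) \<Longrightarrow> 0 < as ! i \<and> as ! i < 2 * pi \<and> cis (as ! i) \<in> E"
  using as_S by (simp add: S_def)
lemma as_less: "i < j \<Longrightarrow> j < CARD('n) \<Longrightarrow> as ! i < as ! j"
  using sorted_as len_as by (simp add: sorted_wrt_iff_nth_less)
lemma as_le: "i \<le> j \<Longrightarrow> j < CARD('n) \<Longrightarrow> as ! i \<le> as ! j"
  using as_less by (metis order.order_iff_strict order_le_less)

lemma th_formula: "i < CARD('n) \<Longrightarrow> th (int CARD('n) * m + int i + 1) = as ! i + 2 * pi * of_int m"
proof -
  assume i: "i < CARD('n)"
  have "(int CARD('n) * m + int i) mod int CARD('n) = int i" using i by simp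
  moreover have "(int CARD('n) * m + int i) div int CARD('n) = m" using i by simp
  ultimately show ?thesis by (simp add: th_def)
qed

lemma th_decomp: "\<exists>m i. i < CARD('n) \<and> k = int CARD('n) * m + int i + 1"
proof -
  define m where "m = (k-1) div int CARD('n)"
  define i where "i = nat ((k-1) mod int CARD('n))"
  have "i < CARD('n)" unfolding i_def using npos by (simp add: nat_less_iff)
  moreover have "k = int CARD('n) * m + int i + 1" unfolding m_def i_def using npos
    by (simp add: mult.commute)
  ultimately show ?thesis by blast
qed

lemma th_step: "th k < th (k+1)"
proof -
  obtain m i where mi: "i < CARD('n)" "k = int CARD('n) * m + int i + 1" using th_decomp by blast
  show ?thesis
  proof (cases "i + 1 < CARD('n)")
    case True
    have "th (k+1) = th (int CARD('n) * m + int (i+1) + 1)" using mi by simp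
    also have "\<dots> = as ! (i+1) + 2 * pi * of_int m" using th_formula[OF True] .
    finally show ?thesis using th_formula[OF mi(1)] mi(2) as_less[OF _ True] by simp
  next
    case False
    then have i: "i = CARD('n) - 1" using mi by simp
    have "th (k+1) = th (int CARD('n) * (m+1) + int 0 + 1)" using mi i npos by (simp add: algebra_simps of_nat_diff)
    also have "\<dots> = as ! 0 + 2 * pi * of_int (m+1)" using th_formula[OF npos] .
    finally show ?thesis using th_formula[OF mi(1)] mi(2) as_bounds[OF mi(1)] as_bounds[OF npos]
      by (simp add: algebra_simps)
  qed
qed

lemma th_mono: "strict_mono th"
proof -
  have aux: "th k < th (k + 1 + int d)" for k d
  proof (induction d)
    case 0 then show ?case using th_step by simp
  next
    case (Suc d)
    have "th (k + 1 + int d) < th (k + 1 + int d + 1)" by (rule th_step)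
    then show ?case using Suc by (simp add: add.assoc)
  qed
  show ?thesis
  proof (rule strict_monoI)
    fix k j :: int assume "k < j"
    then have "j = k + 1 + int (nat (j - k - 1))" by simp
    then show "th k < th j" using aux by metis
  qed
qed

lemma th_range: "range th = {t. is_eigenvalue U (cis t)}"
proof
  show "range th \<subseteq> {t. is_eigenvalue U (cis t)}"
  proof
    fix t assume "t \<in> range th"
    then obtain k where k: "t = th k" by blast
    obtain m i where mi: "i < CARD('n)" "k = int CARD('n) * m + int i + 1" using th_decomp by blast
    have "t = as ! i + 2 * pi * of_int m" using k mi th_formula by simp
    then have "cis t = cis (as ! i)" by (simp add: cis_period)
    then show "t \<in> {t. is_eigenvalue U (cis t)}" using as_bounds[OF mi(1)] by (simp add: E_def)
  qed
  show "{t. is_eigenvalue U (cis t)} \<subseteq> range th"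
  proof
    fix t assume "t \<in> {t. is_eigenvalue U (cis t)}"
    then have "cis t \<in> E" by (simp add: E_def)
    then obtain s where s: "s \<in> S" "cis s = cis t" using cis_S_E by (metis bij_betw_imp_surj_on imageE)
    then obtain m :: int where m: "t = s + 2 * pi * of_int m" using cis_eq_ex by blast
    obtain i where i: "i < CARD('n)" "s = as ! i" using s(1) set_as len_as by (metis in_set_conv_nth)
    have "th (int CARD('n) * m + int i + 1) = t" using th_formula[OF i(1)] i m by simp
    then show "t \<in> range th" by (metis rangeI)
  qed
qed

lemma th0: "th 0 < 0"
proof -
  have "th (int CARD('n) * (-1) + int (CARD('n) - 1) + 1) = as ! (CARD('n) - 1) + 2 * pi * of_int (-1)"
    using npos by (intro th_formula) simp
  moreover have "int CARD('n) * (-1) + int (CARD('n) - 1) + 1 = 0" using npos by (simp add: of_nat_diff)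
  ultimately show ?thesis using as_bounds[of "CARD('n) - 1"] npos by simp
qed

lemma th1: "0 < th 1"
proof -
  have "th (int CARD('n) * 0 + int 0 + 1) = as ! 0 + 2 * pi * of_int 0"
    using npos by (intro th_formula) simp
  then show ?thesis using as_bounds[OF npos] by simp
qed

lemma eigenangle_th: "eigenangle U = th"
  unfolding eigenangle_def
proof (rule the_equality)
  show "strict_mono th \<and> range th = {t. is_eigenvalue U (cis t)} \<and> th 0 < 0 \<and> 0 < th 1"
    using th_mono th_range th0 th1 by blast
  fix f :: "int \<Rightarrow> real" assume "strict_mono f \<and> range f = {t. is_eigenvalue U (cis t)} \<and> f 0 < 0 \<and> 0 < f 1"
  then show "f = th" using enum_unique[of f th] th_mono th_range th0 th1 by auto
qed

definition "D = slit_domain U"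

lemma D_iff: "z \<in> D \<longleftrightarrow> \<not> (\<exists>r k. r \<ge> 1 \<and> z = complex_of_real r * cis (th k))"
  unfolding D_def slit_domain_def eigenangle_th by blast

lemma E_th: "w \<in> E \<Longrightarrow> \<exists>k. w = cis (th k)"
proof -
  assume "w \<in> E"
  then have "is_eigenvalue U (cis (Arg2pi w))" using normE[of w] Arg2pi[of w]
    by (simp add: E_def is_Arg_def cis_conv_exp mult.commute)
  then have "Arg2pi w \<in> range th" using th_range by blast
  moreover have "w = cis (Arg2pi w)" using \<open>w \<in> E\<close> normE[of w] Arg2pi[of w]
    by (simp add: is_Arg_def cis_conv_exp mult.commute)
  ultimately show ?thesis by auto
qed

lemma E_notD: "w \<in> E \<Longrightarrow> w \<notin> D"
  using E_th D_iff by (metis mult_1 of_real_1 order_refl)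

lemma E_nz: "w \<in> E \<Longrightarrow> w \<noteq> 0" using normE by force

lemma ray_ok: assumes "w \<in> E" "z \<in> D" shows "1 - z / w \<notin> \<real>\<^sub>\<le>\<^sub>0"
proof
  assume "1 - z / w \<in> \<real>\<^sub>\<le>\<^sub>0"
  then obtain x where x: "1 - z / w = of_real x" "x \<le> 0" by (rule nonpos_Reals_cases)
  obtain k where k: "w = cis (th k)" using E_th[OF assms(1)] by blast
  have "z / w = complex_of_real (1 - x)" using x(1) by (simp add: algebra_simps)
  then have "z = complex_of_real (1 - x) * w" using E_nz[OF assms(1)]
    by (simp add: divide_eq_eq)
  then have "z = complex_of_real (1 - x) * cis (th k)" using k by simp
  moreover have "1 - x \<ge> 1" using x(2) by simp
  ultimately show False using assms(2) D_iff by blast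
qed

lemma Z_nz: "z \<in> D \<Longrightarrow> charpoly_Z U z \<noteq> 0"
  using E_notD finE by (auto simp: Z_eq)

lemma zero_D: "0 \<in> D"
proof -
  have "\<not> (r \<ge> 1 \<and> 0 = complex_of_real r * cis (th k))" for r k by auto
  then show ?thesis using D_iff by blast
qed

lemma D_starlike: "starlike D"
  unfolding starlike_def
proof (intro bexI[OF _ zero_D] ballI subsetI)
  fix x u assume x: "x \<in> D" and u: "u \<in> closed_segment 0 x"
  then obtain t where t: "0 \<le> t" "t \<le> 1" "u = t *\<^sub>R x" by (auto simp: closed_segment_def)
  show "u \<in> D"
  proof (rule ccontr)
    assume "u \<notin> D"
    then obtain r k where rk: "r \<ge> 1" "u = complex_of_real r * cis (th k)" using D_iff by blast
    have "t \<noteq> 0" using rk t by auto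
    then have "x = complex_of_real (r / t) * cis (th k)" using rk t
      by (simp add: scaleR_conv_of_real field_simps)
    moreover have "r / t \<ge> 1" using rk t \<open>t \<noteq> 0\<close> by (simp add: field_simps)
    ultimately show False using x D_iff by blast
  qed
qed

lemma D_conn: "connected D" using D_starlike starlike_imp_connected by blast

definition "L0 z = (if z \<in> D then Ln (charpoly_Z U 0) + (\<Sum>w\<in>E. Ln (1 - z / w)) else 0)"

lemma L0_cont: "continuous_on D L0"
proof -
  have "continuous_on D (\<lambda>z. Ln (charpoly_Z U 0) + (\<Sum>w\<in>E. Ln (1 - z / w)))"
    by (intro continuous_intros continuous_on_Ln' ray_ok) (auto dest: E_nz)
  then show ?thesis by (rule continuous_on_cong[THEN iffD1, rotated 2]) (auto simp: L0_def)
qed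

lemma L0_exp: assumes "z \<in> D" shows "exp (L0 z) = charpoly_Z U z"
proof -
  have Z0: "charpoly_Z U 0 \<noteq> 0" using Z_nz zero_D by blast
  have nz: "w \<in> E \<Longrightarrow> 1 - z / w \<noteq> 0" for w
    using E_notD[of w] assms E_nz[of w] by (auto simp: field_simps)
  have "exp (L0 z) = charpoly_Z U 0 * (\<Prod>w\<in>E. 1 - z / w)"
    using assms Z0 nz finE by (simp add: L0_def exp_add exp_sum)
  also have "\<dots> = (\<Prod>w\<in>E. - w) * (\<Prod>w\<in>E. 1 - z / w)" by (simp add: Z_eq)
  also have "\<dots> = (\<Prod>w\<in>E. z - w)"
    unfolding prod.distrib[symmetric]
  proof (rule prod.cong[OF refl])
    fix w assume "w \<in> E"
    then have "w \<noteq> 0" by (rule E_nz)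
    then show "- w * (1 - z / w) = z - w" by (simp add: algebra_simps)
  qed
  also have "\<dots> = charpoly_Z U z" by (simp add: Z_eq)
  finally show ?thesis .
qed

lemma L0_zero: "\<exists>t\<in>{-pi<..pi}. L0 0 = \<i> * complex_of_real t"
proof -
  have Z0: "charpoly_Z U 0 \<noteq> 0" using Z_nz zero_D by blast
  have "cmod (\<Prod>w\<in>E. - w) = (\<Prod>w\<in>E. cmod (- w))" by (rule prod_norm[symmetric])
  also have "\<dots> = 1" using normE by simp
  finally have n0: "cmod (charpoly_Z U 0) = 1" by (simp add: Z_eq)
  have "L0 0 = Ln (charpoly_Z U 0)" using zero_D by (simp add: L0_def)
  also have "\<dots> = \<i> * complex_of_real (Im (Ln (charpoly_Z U 0)))"
    using Z0 n0 by (simp add: complex_eq_iff)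
  finally show ?thesis using mpi_less_Im_Ln[OF Z0] Im_Ln_le_pi[OF Z0] by auto
qed

lemma logZ_L0: "logZ U = L0"
  unfolding logZ_def
proof (rule the_equality)
  show "continuous_on (slit_domain U) L0 \<and> (\<forall>z\<in>slit_domain U. exp (L0 z) = charpoly_Z U z) \<and>
    (\<exists>t\<in>{- pi<..pi}. L0 0 = \<i> * complex_of_real t) \<and> (\<forall>z. z \<notin> slit_domain U \<longrightarrow> L0 z = 0)"
    using L0_cont L0_exp L0_zero by (auto simp: D_def[symmetric] L0_def)
next
  fix L assume L: "continuous_on (slit_domain U) L \<and> (\<forall>z\<in>slit_domain U. exp (L z) = charpoly_Z U z) \<and>
    (\<exists>t\<in>{- pi<..pi}. L 0 = \<i> * complex_of_real t) \<and> (\<forall>z. z \<notin> slit_domain U \<longrightarrow> L z = 0)"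
  define h where "h z = L z - L0 z" for z
  have hcont: "continuous_on D h" unfolding h_def using L L0_cont
    by (intro continuous_intros) (auto simp: D_def)
  have hint: "\<exists>m::int. h z = \<i> * complex_of_real (2 * pi * of_int m)" if "z \<in> D" for z
  proof -
    have "exp (h z) = 1" using L L0_exp[OF that] Z_nz[OF that] that
      by (simp add: h_def exp_diff D_def)
    then obtain m :: int where "Re (h z) = 0" "Im (h z) = of_int (2 * m) * pi"
      using exp_eq_1 by blast
    then show ?thesis by (intro exI[of _ m]) (simp add: complex_eq_iff)
  qed
  have "h constant_on D"
  proof (rule continuous_discrete_range_constant[OF D_conn hcont])
    fix x assume x: "x \<in> D"
    show "\<exists>e>0. \<forall>y. y \<in> D \<and> h y \<noteq> h x \<longrightarrow> e \<le> norm (h y - h x)"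
    proof (intro exI[of _ "2 * pi"] conjI allI impI)
      fix y assume y: "y \<in> D \<and> h y \<noteq> h x"
      obtain a :: int where a: "h x = \<i> * complex_of_real (2 * pi * of_int a)" using hint x by blast
      obtain b :: int where b: "h y = \<i> * complex_of_real (2 * pi * of_int b)" using hint y by blast
      have "a \<noteq> b" using a b y by auto
      then have "1 \<le> \<bar>of_int b - of_int a :: real\<bar>" by linarith
      have "h y - h x = \<i> * complex_of_real (2 * pi * (of_int b - of_int a))"
        using a b by (simp add: algebra_simps)
      then have "norm (h y - h x) = \<bar>2 * pi * (of_int b - of_int a)\<bar>"
        by (simp only: norm_mult norm_ii norm_of_real mult_1)
      also have "\<dots> = 2 * pi * \<bar>of_int b - of_int a\<bar>" by (simp add: abs_mult)
      finally have "norm (h y - h x) = 2 * pi * \<bar>of_int b - of_int a\<bar>" .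
      then show "2 * pi \<le> norm (h y - h x)" using \<open>1 \<le> _\<close> pi_gt_zero by simp
    qed simp
  qed
  then obtain c where c: "\<forall>x\<in>D. h x = c" by (auto simp: constant_on_def)
  have "h 0 = 0"
  proof -
    obtain t1 where t1: "t1 \<in> {-pi<..pi}" "L 0 = \<i> * complex_of_real t1" using L by blast
    obtain t0 where t0: "t0 \<in> {-pi<..pi}" "L0 0 = \<i> * complex_of_real t0" using L0_zero by blast
    obtain m :: int where m: "h 0 = \<i> * complex_of_real (2 * pi * of_int m)" using hint zero_D by blast
    have "t1 - t0 = 2 * pi * of_int m" using m t1 t0 by (simp add: h_def complex_eq_iff)
    moreover have "\<bar>t1 - t0\<bar> < 2 * pi" using t1 t0 by auto
    ultimately have "\<bar>of_int m :: real\<bar> < 1" using pi_gt_zero by (simp add: abs_mult)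
    then have "m = 0" by linarith
    then show ?thesis using m by simp
  qed
  then have "c = 0" using c zero_D by auto
  show "L = L0"
  proof
    fix z show "L z = L0 z"
    proof (cases "z \<in> D")
      case True then show ?thesis using c \<open>c = 0\<close> by (simp add: h_def)
    next
      case False then show ?thesis using L by (simp add: L0_def D_def)
    qed
  qed
qed

lemma cis_D: "\<phi> \<notin> range th \<Longrightarrow> cis \<phi> \<in> D"
proof (rule ccontr)
  assume a: "\<phi> \<notin> range th" "cis \<phi> \<notin> D"
  then obtain r k where rk: "r \<ge> 1" "cis \<phi> = complex_of_real r * cis (th k)" using D_iff by blast
  have "cmod (cis \<phi>) = \<bar>r\<bar>" using rk(2) by (simp add: norm_mult)
  then have "r = 1" using rk(1) by simp
  then have "cis \<phi> = cis (th k)" using rk by simp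
  moreover have "is_eigenvalue U (cis (th k))" using th_range by blast
  ultimately have "\<phi> \<in> range th" using th_range by simp
  then show False using a by blast
qed

lemma L0_diff:
  assumes "z1 \<in> D" "z2 \<in> D"
  shows "Im (L0 z2 - L0 z1) = (\<Sum>j<CARD('n). Im (Ln (1 - z2 / cis (as ! j))) - Im (Ln (1 - z1 / cis (as ! j))))"
proof -
  have "Im (L0 z2 - L0 z1) = (\<Sum>w\<in>E. Im (Ln (1 - z2 / w)) - Im (Ln (1 - z1 / w)))"
    using assms by (simp add: L0_def sum_subtractf)
  also have "\<dots> = (\<Sum>t\<in>S. Im (Ln (1 - z2 / cis t)) - Im (Ln (1 - z1 / cis t)))"
  proof -
    have inj: "inj_on cis S" and im: "cis ` S = E" using cis_S_E by (auto simp: bij_betw_def)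
    show ?thesis unfolding im[symmetric] by (simp add: sum.reindex[OF inj])
  qed
  also have "S = (\<lambda>j. as ! j) ` {..<CARD('n)}"
  proof
    show "S \<subseteq> (\<lambda>j. as ! j) ` {..<CARD('n)}"
    proof
      fix x assume "x \<in> S"
      then obtain j where "j < length as" "x = as ! j" using set_as by (metis in_set_conv_nth)
      then show "x \<in> (\<lambda>j. as ! j) ` {..<CARD('n)}" using len_as by auto
    qed
    show "(\<lambda>j. as ! j) ` {..<CARD('n)} \<subseteq> S" using as_S by auto
  qed
  also have "(\<Sum>t\<in>(\<lambda>j. as ! j) ` {..<CARD('n)}. Im (Ln (1 - z2 / cis t)) - Im (Ln (1 - z1 / cis t)))
      = (\<Sum>j<CARD('n). Im (Ln (1 - z2 / cis (as ! j))) - Im (Ln (1 - z1 / cis (as ! j))))"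
  proof (rule sum.reindex[unfolded o_def])
    show "inj_on (\<lambda>j. as ! j) {..<CARD('n)}"
      using sorted_as len_as by (auto simp: inj_on_def dest: as_less intro: ccontr) (metis as_less less_irrefl linorder_neqE_nat)
  qed
  finally show ?thesis .
qed

end

lemma ImLn_pos: assumes "0 < x" "x < 2 * pi" shows "Im (Ln (1 - cis x)) = x / 2 - pi / 2"
proof -
  define y where "y = x / 2"
  have x: "x = 2 * y" by (simp add: y_def)
  have sp: "sin y > 0" using assms by (simp add: y_def sin_gt_zero)
  have eq: "1 - cis x = complex_of_real (2 * sin y) * cis (y - pi / 2)"
    unfolding x by (simp add: complex_eq_iff cos_diff sin_diff cos_double_sin sin_double power2_eq_square)
  have "Ln (1 - cis x) = Ln (complex_of_real (2 * sin y)) + Ln (cis (y - pi / 2))"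
    unfolding eq by (rule Ln_times_of_real) (use sp in auto)
  moreover have "Ln (cis (y - pi / 2)) = complex_of_real (y - pi / 2) * \<i>"
    by (rule Ln_cis) (use assms in \<open>auto simp: y_def\<close>)
  moreover have "Im (Ln (complex_of_real (2 * sin y))) = 0" using sp by (intro Im_Ln_of_real) simp
  ultimately show ?thesis by (simp add: y_def)
qed

lemma ImLn_neg: assumes "- 2 * pi < x" "x < 0" shows "Im (Ln (1 - cis x)) = (x + 2 * pi) / 2 - pi / 2"
proof -
  have "cis x = cis (x + 2 * pi * of_int 1)" by (rule cis_period[symmetric])
  then have "cis x = cis (x + 2 * pi)" by simp
  then show ?thesis using ImLn_pos[of "x + 2 * pi"] assms by simp
qed

context UQ begin

lemma main:
  assumes eps: "\<epsilon> > 0" and a5: "\<forall>j. th j \<notin> {0..\<epsilon>}" and a6: "\<forall>j. th j \<notin> {th k<..th k + \<epsilon>}"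
  shows "real_of_int k = real CARD('n) / (2 * pi) * th k - (1 / pi) * Im (L0 (cis (th k + \<epsilon>)) - L0 (cis \<epsilon>))"
proof -
  obtain m i0 where mi: "i0 < CARD('n)" "k = int CARD('n) * m + int i0 + 1" using th_decomp by blast
  define a where "a = as ! i0"
  have thk: "th k = a + 2 * pi * of_int m" using th_formula[OF mi(1)] mi(2) a_def by simp
  have ba: "0 < a" "a < 2 * pi" using as_bounds[OF mi(1)] a_def by auto
  have D1: "cis \<epsilon> \<in> D"
  proof (rule cis_D)
    show "\<epsilon> \<notin> range th"
    proof
      assume "\<epsilon> \<in> range th"
      then obtain j where "th j = \<epsilon>" by (metis rangeE)
      then show False using a5 eps by (metis atLeastAtMost_iff order_refl less_imp_le)
    qed
  qed
  have D2: "cis (th k + \<epsilon>) \<in> D"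
  proof (rule cis_D)
    show "th k + \<epsilon> \<notin> range th"
    proof
      assume "th k + \<epsilon> \<in> range th"
      then obtain j where "th j = th k + \<epsilon>" by (metis rangeE)
      then show False using a6 eps by (metis greaterThanAtMost_iff less_add_same_cancel1 order_refl)
    qed
  qed
  have dj: "Im (Ln (1 - cis (th k + \<epsilon>) / cis (as ! j))) - Im (Ln (1 - cis \<epsilon> / cis (as ! j)))
      = (if j \<le> i0 then a / 2 - pi else a / 2)" if j: "j < CARD('n)" for j
  proof -
    define b where "b = as ! j"
    have bj: "0 < b" "b < 2 * pi" using as_bounds[OF j] b_def by auto
    have thj: "th (int CARD('n) * 0 + int j + 1) = b" using th_formula[OF j, of 0] b_def by simp
    have "b \<notin> {0..\<epsilon>}" using a5 thj by metis
    then have beps: "b > \<epsilon>" using bj by auto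
    have "cis (th k + \<epsilon>) / cis b = cis (a + \<epsilon> - b + 2 * pi * of_int m)"
      by (simp add: cis_divide thk algebra_simps)
    also have "\<dots> = cis (a + \<epsilon> - b)" by (rule cis_period)
    finally have c1: "cis (th k + \<epsilon>) / cis b = cis (a + \<epsilon> - b)" .
    have c2: "cis \<epsilon> / cis b = cis (\<epsilon> - b)" by (simp add: cis_divide)
    have t2: "Im (Ln (1 - cis (\<epsilon> - b))) = (\<epsilon> - b + 2 * pi) / 2 - pi / 2"
      using beps bj eps by (intro ImLn_neg) auto
    show ?thesis
    proof (cases "j \<le> i0")
      case True
      have "b \<le> a" using as_le[OF True mi(1)] a_def b_def by simp
      have th2: "th (int CARD('n) * (m + 1) + int j + 1) = b + 2 * pi * of_int (m + 1)"
        using th_formula[OF j] b_def by simp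
      have "b + 2 * pi * of_int (m + 1) > th k" using thk ba bj by (simp add: algebra_simps)
      then have "b + 2 * pi * of_int (m + 1) > th k + \<epsilon>" using a6 th2
        by (metis greaterThanAtMost_iff not_le)
      then have "a + \<epsilon> - b < 2 * pi" using thk by (simp add: algebra_simps)
      moreover have "0 < a + \<epsilon> - b" using \<open>b \<le> a\<close> eps by simp
      ultimately have t1: "Im (Ln (1 - cis (a + \<epsilon> - b))) = (a + \<epsilon> - b) / 2 - pi / 2"
        by (intro ImLn_pos)
      show ?thesis using True c1 c2 t1 t2 b_def by (simp add: field_simps)
    next
      case False
      then have "i0 < j" by simp
      have "a < b" using as_less[OF \<open>i0 < j\<close> j] a_def b_def by simp
      have th2: "th (int CARD('n) * m + int j + 1) = b + 2 * pi * of_int m"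
        using th_formula[OF j] b_def by simp
      have "b + 2 * pi * of_int m > th k" using thk \<open>a < b\<close> by simp
      then have "b + 2 * pi * of_int m > th k + \<epsilon>" using a6 th2
        by (metis greaterThanAtMost_iff not_le)
      then have "a + \<epsilon> - b < 0" using thk by (simp add: algebra_simps)
      moreover have "- 2 * pi < a + \<epsilon> - b" using ba bj eps by simp
      ultimately have t1: "Im (Ln (1 - cis (a + \<epsilon> - b))) = (a + \<epsilon> - b + 2 * pi) / 2 - pi / 2"
        by (intro ImLn_neg)
      show ?thesis using False c1 c2 t1 t2 b_def by (simp add: field_simps)
    qed
  qed
  have "Im (L0 (cis (th k + \<epsilon>)) - L0 (cis \<epsilon>)) = (\<Sum>j<CARD('n). (if j \<le> i0 then a / 2 - pi else a / 2))"
    using L0_diff[OF D1 D2] dj by simp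
  also have "\<dots> = (\<Sum>j<CARD('n). a / 2) - (\<Sum>j<CARD('n). (if j \<le> i0 then pi else 0))"
    unfolding sum_subtractf[symmetric] by (rule sum.cong) auto
  also have "(\<Sum>j<CARD('n). (if j \<le> i0 then pi else 0)) = pi * real (i0 + 1)"
  proof -
    have "{..<CARD('n)} \<inter> {j. j \<le> i0} = {..i0}" using mi(1) by auto
    then show ?thesis by (simp add: sum.If_cases)
  qed
  finally have I: "Im (L0 (cis (th k + \<epsilon>)) - L0 (cis \<epsilon>)) = real CARD('n) * a / 2 - pi * real (i0 + 1)"
    by simp
  have "real CARD('n) / (2 * pi) * th k - (1 / pi) * Im (L0 (cis (th k + \<epsilon>)) - L0 (cis \<epsilon>))
        = real CARD('n) * of_int m + real i0 + 1"
    unfolding I unfolding thk using pi_gt_zero by (simp add: field_simps)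
  also have "\<dots> = real_of_int k" using mi(2) by simp
  finally show ?thesis by simp
qed

end

theorem corollary2p1:
  fixes U :: "complex^'n^'n" and k :: int and \<epsilon> :: real
  assumes "unitary_mat U"
    and "card {z. is_eigenvalue U z} = CARD('n)"
    and "\<not> is_eigenvalue U 1"
    and "\<epsilon> > 0"
    and "\<forall>j. eigenangle U j \<notin> {0..\<epsilon>}"
    and "\<forall>j. eigenangle U j \<notin> {eigenangle U k<..eigenangle U k + \<epsilon>}"
  shows "real_of_int k = renorm_eigenangle U k
           - (1 / pi) * Im (logZ U (cis (eigenangle U k + \<epsilon>)) - logZ U (cis \<epsilon>))"
proof -
  interpret UQ U using assms(1-3) by unfold_locales
  show ?thesis
    using main[OF assms(4)] assms(5,6)
    unfolding renorm_eigenangle_def eigenangle_th logZ_L0 by simp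
qed

end
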